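(* For every $n\in\{2,6,10,\dots\}$, every increasing path of $f_n$ that starts at the origin and ends at a local maximum of $f_n$ has length at least $2^{n/4}$. Hence any local search algorithm (with any neighbor selection and tie-breaking rule) that starts at the origin and moves at each step to a neighbor with strictly larger value of $f_n$ takes at least $2^{n/4}$ steps to reach a local maximum; since $f_n$ has encoding size polynomial in $n$, this is exponential both in $n$ and in the size of $f_n$.
   Context: For $n\in\{2,6,10,\dots\}$ define polynomials $f_n$ in variables $x_1,\dots,x_n$ (evaluated on $\{0,1\}^n$) recursively. Set $f_2(x_1,x_2):=x_1+x_2$. For $n\in\{2,6,10,\dots\}$, write $\mathbf{x}=(x_1,\dots,x_n)$, $S:=\sum_{i=1}^n x_i$, let $M_n:=\max_{\{0,1\}^n} f_n-\min_{\{0,1\}^n} f_n+1$, and define $f_{n+4}(\mathbf{x},x_{n+1},x_{n+2},x_{n+3},x_{n+4}) := f_n(\mathbf{x}) - M_n n^2 x_{n+1} + M_n(n+1) S x_{n+1} - x_{n+2} - 2M_n n S x_{n+2} + 2M_n n(n+2) x_{n+1}x_{n+2} - 4 S x_{n+3} + 2x_{n+1}x_{n+3} + 2x_{n+2}x_{n+3} - 3x_{n+3} + (M_n(n-1)+4) S x_{n+4} + 6M_n n^2 x_{n+3}x_{n+4} - 5M_n n^2 x_{n+4}$. For a function $f:\{0,1\}^m\to\mathbb{R}$, an increasing path is a sequence of vertices $v_0,v_1,\dots,v_k$ of $\{0,1\}^m$ such that consecutive vertices differ in exactly one coordinate and $f(v_{j+1})>f(v_j)$ for all $j$; its length is $k$.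 A local maximum is a vertex no neighbor of which (vertex differing in exactly one coordinate) has strictly larger value. *)

theory Defs
  imports Complex_Main
begin

definition cube :: "nat \<Rightarrow> (nat \<Rightarrow> real) set" where
  "cube m = {x. \<forall>i. (i \<in> {1..m} \<longrightarrow> x i \<in> {0,1}) \<and> (i \<notin> {1..m} \<longrightarrow> x i = 0)}"

text \<open>fpoly_aux k is the polynomial f_n with n = 4k+2.\<close>

primrec fpoly_aux :: "nat \<Rightarrow> (nat \<Rightarrow> real) \<Rightarrow> real" where
  "fpoly_aux 0 = (\<lambda>x. x 1 + x 2)"
| "fpoly_aux (Suc k) =
     (let g = fpoly_aux k;
          n = 4 * k + 2;
          M = Max (g ` cube n) - Min (g ` cube n) + 1;
          nr = real n
      in (\<lambda>x. let S = (\<Sum>i = 1..n. x i) in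
             g x - M * nr^2 * x (n+1) + M * (nr+1) * S * x (n+1)
             - x (n+2) - 2 * M * nr * S * x (n+2)
             + 2 * M * nr * (nr+2) * x (n+1) * x (n+2)
             - 4 * S * x (n+3) + 2 * x (n+1) * x (n+3) + 2 * x (n+2) * x (n+3)
             - 3 * x (n+3)
             + (M * (nr - 1) + 4) * S * x (n+4)
             + 6 * M * nr^2 * x (n+3) * x (n+4)
             - 5 * M * nr^2 * x (n+4)))"

definition fpoly :: "nat \<Rightarrow> (nat \<Rightarrow> real) \<Rightarrow> real" where
  "fpoly n = fpoly_aux ((n - 2) div 4)"

definition adjacent :: "nat \<Rightarrow> (nat \<Rightarrow> real) \<Rightarrow> (nat \<Rightarrow> real) \<Rightarrow> bool" where
  "adjacent m v w \<longleftrightarrow> v \<in> cube m \<and> w \<in> cube m \<and> card {i. v i \<noteq> w i} = 1"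

text \<open>An increasing path v_0,...,v_k is a nonempty list; its length is length p - 1.\<close>

definition increasing_path :: "nat \<Rightarrow> ((nat \<Rightarrow> real) \<Rightarrow> real) \<Rightarrow> (nat \<Rightarrow> real) list \<Rightarrow> bool" where
  "increasing_path m f p \<longleftrightarrow> p \<noteq> [] \<and> set p \<subseteq> cube m \<and>
     (\<forall>j. Suc j < length p \<longrightarrow> adjacent m (p ! j) (p ! Suc j) \<and> f (p ! Suc j) > f (p ! j))"

definition local_max :: "nat \<Rightarrow> ((nat \<Rightarrow> real) \<Rightarrow> real) \<Rightarrow> (nat \<Rightarrow> real) \<Rightarrow> bool" where
  "local_max m f v \<longleftrightarrow> v \<in> cube m \<and> (\<forall>w. adjacent m v w \<longrightarrow> \<not> f w > f v)"

end

theory Submission imports Defs begin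

definition ones :: "nat \<Rightarrow> nat \<Rightarrow> real" where
  "ones n = (\<lambda>i. if i \<in> {1..n} then 1 else 0)"
definition rs :: "nat \<Rightarrow> (nat \<Rightarrow> real) \<Rightarrow> nat \<Rightarrow> real" where
  "rs n v = (\<lambda>i. if i \<in> {1..n} then v i else 0)"

lemma cube_sub: "cube n \<subseteq> (\<lambda>A i. if i \<in> A then 1 else 0) ` Pow {1..n}"
proof
  fix x assume x: "x \<in> cube n"
  have "x = (\<lambda>i. if i \<in> {i\<in>{1..n}. x i = 1} then 1 else 0)"
  proof
    fix i show "x i = (if i \<in> {i\<in>{1..n}. x i = 1} then 1 else 0)"
      using x unfolding cube_def by (cases "i \<in> {1..n}") auto
  qed
  then show "x \<in> (\<lambda>A i. if i \<in> A then 1 else 0) ` Pow {1..n}" by blast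
qed

lemma finite_cube: "finite (cube n)"
  by (rule finite_subset[OF cube_sub]) simp

lemma zero_cube: "(\<lambda>_. 0) \<in> cube n" unfolding cube_def by auto

lemma ones_cube: "ones n \<in> cube n" unfolding cube_def ones_def by auto

lemma rs_cube: "v \<in> cube m \<Longrightarrow> n \<le> m \<Longrightarrow> rs n v \<in> cube n"
  unfolding cube_def rs_def by auto

lemma cube_le_cube: assumes "v \<in> cube n" "n \<le> m" shows "v \<in> cube m"
proof -
  have a: "\<And>i. i \<in> {1..n} \<Longrightarrow> v i \<in> {0,1}" "\<And>i. i \<notin> {1..n} \<Longrightarrow> v i = 0"
    using assms(1) unfolding cube_def by auto
  have "v i \<in> {0,1}" for i using a[of i] by (cases "i \<in> {1..n}") auto
  moreover have "i \<notin> {1..m} \<Longrightarrow> v i = 0" for i using a(2)[of i] assms(2) by auto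
  ultimately show ?thesis unfolding cube_def by auto
qed

lemma cube01: "v \<in> cube m \<Longrightarrow> v i = 0 \<or> v i = 1"
  unfolding cube_def by (cases "i \<in> {1..m}") auto

lemma cube_ge0: "v \<in> cube m \<Longrightarrow> 0 \<le> v i"
  using cube01[of v m i] by auto
lemma cube_le1: "v \<in> cube m \<Longrightarrow> v i \<le> 1"
  using cube01[of v m i] by auto
lemma cube_ofb: "v \<in> cube m \<Longrightarrow> v i = of_bool (v i = 1)"
  using cube01[of v m i] by auto

lemma flip_cube: "v \<in> cube m \<Longrightarrow> j \<in> {1..m} \<Longrightarrow> v(j := 1 - v j) \<in> cube m"
  unfolding cube_def by auto

lemma adjacent_iff: "adjacent m v w \<longleftrightarrow> v \<in> cube m \<and> w \<in> cube m \<and> (\<exists>j\<in>{1..m}. w = v(j := 1 - v j))"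
proof
  assume a: "adjacent m v w"
  then have v: "v \<in> cube m" and w: "w \<in> cube m" and c: "card {i. v i \<noteq> w i} = 1"
    unfolding adjacent_def by auto
  from c obtain j where j: "{i. v i \<noteq> w i} = {j}" using card_1_singletonE by blast
  have j1: "v j \<noteq> w j" using j by blast
  have j2: "w i = v i" if "i \<noteq> j" for i
  proof (rule ccontr)
    assume "w i \<noteq> v i"
    then have "i \<in> {i. v i \<noteq> w i}" by simp
    then show False using j that by blast
  qed
  have jm: "j \<in> {1..m}"
  proof (rule ccontr)
    assume "j \<notin> {1..m}"
    then have "v j = 0" "w j = 0" using v w unfolding cube_def by auto
    then show False using j1 by simp
  qed
  have "w j = 1 - v j" using j1 cube01[OF v, of j] cube01[OF w, of j] by linarith
  then have "w = v(j := 1 - v j)" using j2 by (intro ext) simp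
  then show "v \<in> cube m \<and> w \<in> cube m \<and> (\<exists>j\<in>{1..m}. w = v(j := 1 - v j))" using v w jm by blast
next
  assume "v \<in> cube m \<and> w \<in> cube m \<and> (\<exists>j\<in>{1..m}. w = v(j := 1 - v j))"
  then obtain j where v: "v \<in> cube m" and w: "w \<in> cube m" and jm: "j \<in> {1..m}" and wj: "w = v(j := 1 - v j)" by blast
  have "v j \<noteq> 1 - v j" using cube01[OF v, of j] by linarith
  then have "{i. v i \<noteq> w i} = {j}" using wj by auto
  then show "adjacent m v w" unfolding adjacent_def using v w by simp
qed

lemma fpoly_dep: "(\<And>i. i \<in> {1..4*k+2} \<Longrightarrow> x i = y i) \<Longrightarrow> fpoly_aux k x = fpoly_aux k y"
proof (induction k arbitrary: x y)
  case 0
  then show ?case by simp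
next
  case (Suc k)
  have g: "fpoly_aux k x = fpoly_aux k y" using Suc.prems by (intro Suc.IH) auto
  have s: "(\<Sum>i = 1..4*k+2. x i) = (\<Sum>i = 1..4*k+2. y i)" using Suc.prems by (intro sum.cong) auto
  have e: "x (4*k+2+1) = y (4*k+2+1)" "x (4*k+2+2) = y (4*k+2+2)" "x (4*k+2+3) = y (4*k+2+3)" "x (4*k+2+4) = y (4*k+2+4)"
    using Suc.prems by auto
  show ?case by (simp only: fpoly_aux.simps Let_def g s e)
qed

lemma sum_flip: "finite A \<Longrightarrow> j \<in> A \<Longrightarrow> sum (v(j := y)) A = sum v A - v j + (y::real)"
proof -
  assume a: "finite A" "j \<in> A"
  have "sum (v(j := y)) A = y + sum (v(j := y)) (A - {j})" using sum.remove[OF a, of "v(j:=y)"] by simp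
  also have "sum (v(j := y)) (A - {j}) = sum v (A - {j})" by (intro sum.cong) auto
  also have "sum v (A - {j}) = sum v A - v j" using sum.remove[OF a, of v] by simp
  finally show ?thesis by simp
qed

lemma sum_flip_out: "j \<notin> A \<Longrightarrow> sum (v(j := y)) A = sum v A"
  by (intro sum.cong) auto

lemma sum_card: assumes "v \<in> cube m"
  shows "(\<Sum>i=1..n. v i) = real (card {i\<in>{1..n}. v i = 1})"
proof -
  have "(\<Sum>i=1..n. v i) = (\<Sum>i=1..n. of_bool (v i = 1))"
    by (intro sum.cong refl cube_ofb[OF assms])
  also have "\<dots> = real (card ({1..n} \<inter> {i. v i = 1}))" by simp
  finally show ?thesis by (simp add: Int_def)
qed

lemma sum_bounds: assumes "v \<in> cube m"
  shows "0 \<le> (\<Sum>i=1..n. v i)" "(\<Sum>i=1..n. v i) \<le> real n"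
proof -
  show "0 \<le> (\<Sum>i=1..n. v i)" by (intro sum_nonneg cube_ge0[OF assms])
  have "(\<Sum>i=1..n. v i) \<le> (\<Sum>i=1..n. 1)" by (intro sum_mono cube_le1[OF assms])
  then show "(\<Sum>i=1..n. v i) \<le> real n" by simp
qed

lemma sum_full: assumes "v \<in> cube m" "(\<Sum>i=1..n. v i) = real n" "i \<in> {1..n}"
  shows "v i = 1"
proof -
  have "(\<Sum>i=1..n. 1 - v i) = 0" using assms(2) by (simp add: sum_subtractf)
  moreover have "\<forall>i\<in>{1..n}. 0 \<le> 1 - v i" using cube_le1[OF assms(1)] by auto
  ultimately have "\<forall>i\<in>{1..n}. 1 - v i = 0" using sum_nonneg_eq_0_iff[of "{1..n}" "\<lambda>i. 1 - v i"] by auto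
  then show ?thesis using assms(3) by auto
qed

lemma sum_empty: assumes "v \<in> cube m" "(\<Sum>i=1..n. v i) = 0" "i \<in> {1..n}"
  shows "v i = 0"
proof -
  have "\<forall>i\<in>{1..n}. 0 \<le> v i" using cube_ge0[OF assms(1)] by auto
  then have "\<forall>i\<in>{1..n}. v i = 0" using assms(2) sum_nonneg_eq_0_iff[of "{1..n}" v] by auto
  then show ?thesis using assms(3) by auto
qed

lemma sum_int: assumes "v \<in> cube m"
  shows "\<exists>N::nat. (\<Sum>i=1..n. v i) = real N \<and> N \<le> n"
proof -
  have "card {i\<in>{1..n}. v i = 1} \<le> card {1..n}" by (intro card_mono) auto
  then have "card {i\<in>{1..n}. v i = 1} \<le> n" by simp
  moreover have "(\<Sum>i=1..n. v i) = real (card {i\<in>{1..n}. v i = 1})" by (rule sum_card[OF assms])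
  ultimately show ?thesis by blast
qed


definition Mk :: "nat \<Rightarrow> real" where
  "Mk k = Max (fpoly_aux k ` cube (4*k+2)) - Min (fpoly_aux k ` cube (4*k+2)) + 1"

definition Kf :: "nat \<Rightarrow> real \<Rightarrow> (nat \<Rightarrow> real) \<Rightarrow> real" where
  "Kf n M x = M * (real n + 1) * x (n+1) - 2 * M * real n * x (n+2) - 4 * x (n+3) + (M * (real n - 1) + 4) * x (n+4)"

definition Tf :: "nat \<Rightarrow> real \<Rightarrow> (nat \<Rightarrow> real) \<Rightarrow> real" where
  "Tf n M x = - M * (real n)^2 * x (n+1) - x (n+2) + 2 * M * real n * (real n + 2) * x (n+1) * x (n+2)
     + 2 * x (n+1) * x (n+3) + 2 * x (n+2) * x (n+3) - 3 * x (n+3)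
     + 6 * M * (real n)^2 * x (n+3) * x (n+4) - 5 * M * (real n)^2 * x (n+4)"

lemma F_eq: "fpoly_aux (Suc k) x = fpoly_aux k x + (\<Sum>i=1..4*k+2. x i) * Kf (4*k+2) (Mk k) x + Tf (4*k+2) (Mk k) x"
  unfolding fpoly_aux.simps Let_def Mk_def Kf_def Tf_def by (simp add: algebra_simps)

lemma g_bounds: assumes "v \<in> cube m" "4*k+2 \<le> m"
  shows "Min (fpoly_aux k ` cube (4*k+2)) \<le> fpoly_aux k v" "fpoly_aux k v \<le> Max (fpoly_aux k ` cube (4*k+2))"
proof -
  have e: "fpoly_aux k v = fpoly_aux k (rs (4*k+2) v)" by (rule fpoly_dep) (simp add: rs_def)
  have r: "rs (4*k+2) v \<in> cube (4*k+2)" by (rule rs_cube[OF assms])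
  show "Min (fpoly_aux k ` cube (4*k+2)) \<le> fpoly_aux k v" unfolding e using r finite_cube by simp
  show "fpoly_aux k v \<le> Max (fpoly_aux k ` cube (4*k+2))" unfolding e using r finite_cube by simp
qed

lemma M_ge1: "1 \<le> Mk k"
  using g_bounds[OF zero_cube order_refl, of k] unfolding Mk_def by linarith

lemma g_diff: assumes "v \<in> cube m" "w \<in> cube m" "4*k+2 \<le> m"
  shows "fpoly_aux k w - fpoly_aux k v \<le> Mk k - 1"
  using g_bounds[OF assms(1,3)] g_bounds[OF assms(2,3)] unfolding Mk_def by linarith


definition inph :: "nat \<Rightarrow> nat \<Rightarrow> (nat \<Rightarrow> real) \<Rightarrow> bool" where
  "inph n q v \<longleftrightarrow> v \<in> cube (n+4) \<and> q \<le> 4 \<and> v (n+1) = of_bool (1 \<le> q) \<and> v (n+2) = of_bool (2 \<le> q)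
     \<and> v (n+3) = of_bool (3 \<le> q) \<and> v (n+4) = of_bool (4 \<le> q)
     \<and> (q = 1 \<longrightarrow> (\<forall>i\<in>{1..n}. v i = 1)) \<and> (q = 3 \<longrightarrow> (\<forall>i\<in>{1..n}. v i = 0))"

lemma F_eq': "n = 4*k+2 \<Longrightarrow> fpoly_aux (Suc k) x = fpoly_aux k x + (\<Sum>i=1..n. x i) * Kf n (Mk k) x + Tf n (Mk k) x"
  using F_eq by simp

lemma Fx: assumes "n = 4*k+2" "j \<in> {1..n}"
  shows "fpoly_aux (Suc k) (v(j:=y)) = fpoly_aux k (v(j:=y)) + ((\<Sum>i=1..n. v i) - v j + y) * Kf n (Mk k) v + Tf n (Mk k) v"
proof -
  have "Kf n (Mk k) (v(j:=y)) = Kf n (Mk k) v" "Tf n (Mk k) (v(j:=y)) = Tf n (Mk k) v"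
    using assms(2) by (auto simp: Kf_def Tf_def)
  moreover have "(\<Sum>i=1..n. (v(j:=y)) i) = (\<Sum>i=1..n. v i) - v j + y" using sum_flip[of "{1..n}" j v y] assms(2) by simp
  ultimately show ?thesis using F_eq'[OF assms(1), of "v(j:=y)"] by simp
qed

lemma Fo: assumes "n = 4*k+2" "j \<in> {n+1..n+4}"
  shows "fpoly_aux (Suc k) (v(j:=y)) = fpoly_aux k v + (\<Sum>i=1..n. v i) * Kf n (Mk k) (v(j:=y)) + Tf n (Mk k) (v(j:=y))"
proof -
  have "fpoly_aux k (v(j:=y)) = fpoly_aux k v" using assms by (intro fpoly_dep) auto
  moreover have "(\<Sum>i=1..n. (v(j:=y)) i) = (\<Sum>i=1..n. v i)" using assms(2) by (intro sum_flip_out) auto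
  ultimately show ?thesis using F_eq'[OF assms(1), of "v(j:=y)"] by simp
qed


lemma prods: fixes s M nr :: real assumes "0 \<le> s" "s \<le> nr" "1 \<le> M" "2 \<le> nr"
  shows "0 \<le> s*M" "s*M \<le> nr*M" "0 \<le> s*M*nr" "s*M*nr \<le> nr*M*nr" "nr \<le> M*nr" "nr*nr \<le> M*nr*nr"
    "2*nr \<le> nr*nr" "M*2 \<le> M*nr" "s * nr \<le> nr * nr" "s*M \<le> s*M*nr"
proof -
  show "s*M \<le> s*M*nr" using assms mult_left_mono[of 1 nr "s*M"] by simp
  show "0 \<le> s*M" using assms by simp
  show "s*M \<le> nr*M" using assms by (intro mult_right_mono) auto
  show "0 \<le> s*M*nr" using assms by simp
  show "s*M*nr \<le> nr*M*nr" using assms by (intro mult_right_mono) auto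
  show "nr \<le> M*nr" using assms mult_right_mono[of 1 M nr] by simp
  show "nr*nr \<le> M*nr*nr" using assms mult_right_mono[of 1 M "nr*nr"] by (simp add: mult.assoc)
  show "2*nr \<le> nr*nr" using assms by (intro mult_right_mono) auto
  show "M*2 \<le> M*nr" using assms by (intro mult_left_mono) auto
  show "s * nr \<le> nr * nr" using assms by (intro mult_right_mono) auto
qed

lemma g_rs: "n = 4*k+2 \<Longrightarrow> fpoly_aux k (rs n v) = fpoly_aux k v"
  by (rule fpoly_dep) (simp add: rs_def)

lemma xmove: assumes "v \<in> cube (n+4)" "j \<in> {1..n}"
  shows "adjacent n (rs n v) (rs n (v(j := 1 - v j)))"
proof -
  have "rs n (v(j := 1 - v j)) = (rs n v)(j := 1 - rs n v j)" using assms(2) by (auto simp: rs_def)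
  moreover have "rs n v \<in> cube n" "rs n (v(j := 1 - v j)) \<in> cube n"
    using assms by (auto intro!: rs_cube flip_cube)
  ultimately show ?thesis unfolding adjacent_iff using assms(2) by blast
qed

lemma rs_out: "j \<notin> {1..n} \<Longrightarrow> rs n (v(j := y)) = rs n v"
  by (auto simp: rs_def)

lemma xmove_inph: assumes "inph n q v" "q = 0 \<or> q = 2 \<or> q = 4" "j \<in> {1..n}"
  shows "inph n q (v(j := 1 - v j))"
  using assms flip_cube[of v "n+4" j] unfolding inph_def by auto


lemma step:
  assumes n: "n = 4*k+2" and v: "inph n q v" and adj: "adjacent (n+4) v w"
    and inc: "fpoly_aux (Suc k) v < fpoly_aux (Suc k) w"
  shows "(inph n q w \<and> ((q = 0 \<or> q = 4) \<longrightarrow> adjacent n (rs n v) (rs n w) \<and> fpoly_aux k (rs n v) < fpoly_aux k (rs n w)))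
         \<or> (inph n (Suc q) w \<and> rs n w = rs n v)"
proof -
  from adj obtain j where j: "j \<in> {1..n+4}" and w: "w = v(j := 1 - v j)" unfolding adjacent_iff by blast
  have vc: "v \<in> cube (n+4)" and q4: "q \<le> 4" using v by (auto simp: inph_def)
  have wc: "w \<in> cube (n+4)" using flip_cube[OF vc j] w by simp
  define s where "s = (\<Sum>i=1..n. v i)"
  define M where "M = Mk k"
  define nr where "nr = real n"
  have hs: "0 \<le> s" "s \<le> nr" using sum_bounds[OF vc] by (auto simp: s_def nr_def)
  have hM: "1 \<le> M" using M_ge1 by (simp add: M_def)
  have hn: "2 \<le> nr" using n by (simp add: nr_def)
  note P = prods[OF hs hM hn]
  note Pn = P[simplified algebra_simps power2_eq_square]
  obtain N where N: "s = real N" "N \<le> n" using sum_int[OF vc, of n] s_def by blast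
  have ev: "fpoly_aux (Suc k) v = fpoly_aux k v + s * Kf n M v + Tf n M v" using F_eq'[OF n] by (simp add: s_def M_def)
  show ?thesis
  proof (cases "j \<le> n")
    case True
    then have jn: "j \<in> {1..n}" using j by auto
    have ew: "fpoly_aux (Suc k) w = fpoly_aux k w + (s - v j + (1 - v j)) * Kf n M v + Tf n M v"
      using Fx[OF n jn, of v "1 - v j"] w by (simp add: s_def M_def)
    have gd: "fpoly_aux k w - fpoly_aux k v \<le> M - 1" using g_diff[OF vc wc, of k] n by (simp add: M_def)
    have inc2: "0 < fpoly_aux k w - fpoly_aux k v + (1 - 2 * v j) * Kf n M v"
      using inc unfolding ev ew by (simp add: algebra_simps)
    consider "q = 0 \<or> q = 4" | "q = 1" | "q = 2" | "q = 3" using q4 by linarith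
    then show ?thesis
    proof cases
      case 1
      have K0: "Kf n M v = 0" using v 1 by (auto simp: inph_def Kf_def algebra_simps)
      then have "fpoly_aux k v < fpoly_aux k w" using inc2 by simp
      moreover have "fpoly_aux k (rs n v) = fpoly_aux k v" "fpoly_aux k (rs n w) = fpoly_aux k w" using g_rs[OF n] by auto
      ultimately show ?thesis using xmove[OF vc jn] xmove_inph[OF v _ jn] 1 w by auto
    next
      case 2
      have "v j = 1" using v 2 jn by (auto simp: inph_def)
      moreover have "Kf n M v = M * (nr + 1)" using v 2 by (simp add: inph_def Kf_def nr_def)
      ultimately have False using inc2 gd P hn hM by (simp add: algebra_simps ; linarith)
      then show ?thesis ..
    next
      case 3
      then show ?thesis using xmove_inph[OF v _ jn] w by auto
    next
      case 4
      have "v j = 0" using v 4 jn by (auto simp: inph_def)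
      moreover have "Kf n M v = M * (nr + 1) - 2 * M * nr - 4" using v 4 by (simp add: inph_def Kf_def nr_def)
      ultimately have False using inc2 gd P hn hM by (simp add: algebra_simps ; linarith)
      then show ?thesis ..
    qed
  next
    case False
    then have jo: "j \<in> {n+1..n+4}" using j by auto
    have rsw: "rs n w = rs n v" using w rs_out False by auto
    have ew: "fpoly_aux (Suc k) w = fpoly_aux k v + s * Kf n M w + Tf n M w"
      using Fo[OF n jo, of v "1 - v j"] w by (simp add: s_def M_def)
    have inc3: "s * Kf n M v + Tf n M v < s * Kf n M w + Tf n M w" using inc unfolding ev ew by simp
    have jc: "j = n+1 \<or> j = n+2 \<or> j = n+3 \<or> j = n+4" using jo by auto
    have wo: "\<And>i. i \<noteq> j \<Longrightarrow> w i = v i" using w by simp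
    have wj: "w j = 1 - v j" using w by simp
    consider "q = 0" | "q = 1" | "q = 2" | "q = 3" | "q = 4" using q4 by linarith
    then show ?thesis
    proof cases
      case 1
      have va: "v (n+1) = 0" "v (n+2) = 0" "v (n+3) = 0" "v (n+4) = 0" using v 1 by (auto simp: inph_def)
      have qq: "q = 0" by fact
      consider "j = n+1" | "j = n+2" | "j = n+3" | "j = n+4" using jc by blast
      then show ?thesis
      proof cases
        case 1
        have wa: "w (n+1) = 1" "w (n+2) = 0" "w (n+3) = 0" "w (n+4) = 0" using va by (simp_all add: w 1)
        note ineq = inc3[unfolded Kf_def Tf_def va wa, simplified, simplified nr_def[symmetric] algebra_simps power2_eq_square, simplified]
        have "s = nr"
        proof (rule ccontr)
          assume "s \<noteq> nr"
          then have "N < n" using N nr_def by auto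
          then have "s \<le> nr - 1" using N nr_def by auto
          then have "s * (M*(nr+1)) \<le> (nr - 1) * (M*(nr+1))" using hM hn by (intro mult_right_mono) auto
          then show False using ineq hM by (simp add: algebra_simps power2_eq_square)
        qed
        then have "\<forall>i\<in>{1..n}. v i = 1" using sum_full[OF vc] s_def nr_def by auto
        then have "inph n (Suc q) w" using wc wa qq 1 unfolding inph_def by (auto simp: w)
        then show ?thesis using rsw by simp
      next
        case 2
        have wa: "w (n+1) = 0" "w (n+2) = 1" "w (n+3) = 0" "w (n+4) = 0" using va by (simp_all add: w 2)
        note ineq = inc3[unfolded Kf_def Tf_def va wa, simplified, simplified nr_def[symmetric] algebra_simps power2_eq_square, simplified]
        have False using ineq Pn hs hM hn by linarith
        then show ?thesis ..
      next
        case 3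
        have wa: "w (n+1) = 0" "w (n+2) = 0" "w (n+3) = 1" "w (n+4) = 0" using va by (simp_all add: w 3)
        note ineq = inc3[unfolded Kf_def Tf_def va wa, simplified, simplified nr_def[symmetric] algebra_simps power2_eq_square, simplified]
        have False using ineq Pn hs hM hn by linarith
        then show ?thesis ..
      next
        case 4
        have wa: "w (n+1) = 0" "w (n+2) = 0" "w (n+3) = 0" "w (n+4) = 1" using va by (simp_all add: w 4)
        note ineq = inc3[unfolded Kf_def Tf_def va wa, simplified, simplified nr_def[symmetric] algebra_simps power2_eq_square, simplified]
        have False using ineq Pn hs hM hn by linarith
        then show ?thesis ..
      qed
    next
      case 2
      have va: "v (n+1) = 1" "v (n+2) = 0" "v (n+3) = 0" "v (n+4) = 0" "\<forall>i\<in>{1..n}. v i = 1" using v 2 by (auto simp: inph_def)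
      have qq: "q = 1" by fact
      have "s = (\<Sum>i=1..n. (1::real))" unfolding s_def using va(5) by (intro sum.cong) auto
      then have sn: "s = nr" by (simp add: nr_def)
      consider "j = n+1" | "j = n+2" | "j = n+3" | "j = n+4" using jc by blast
      then show ?thesis
      proof cases
        case 1
        have wa: "w (n+1) = 0" "w (n+2) = 0" "w (n+3) = 0" "w (n+4) = 0" using va by (simp_all add: w 1)
        note ineq = inc3[unfolded Kf_def Tf_def va wa sn, simplified, simplified nr_def[symmetric] algebra_simps power2_eq_square, simplified]
        have False using ineq Pn hs hM hn by linarith
        then show ?thesis ..
      next
        case 2
        have wa: "w (n+1) = 1" "w (n+2) = 1" "w (n+3) = 0" "w (n+4) = 0" using va by (simp_all add: w 2)
        have "inph n (Suc q) w" using wc wa va qq 2 unfolding inph_def by (auto simp: w)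
        then show ?thesis using rsw by simp
      next
        case 3
        have wa: "w (n+1) = 1" "w (n+2) = 0" "w (n+3) = 1" "w (n+4) = 0" using va by (simp_all add: w 3)
        note ineq = inc3[unfolded Kf_def Tf_def va wa sn, simplified, simplified nr_def[symmetric] algebra_simps power2_eq_square, simplified]
        have False using ineq Pn hs hM hn by linarith
        then show ?thesis ..
      next
        case 4
        have wa: "w (n+1) = 1" "w (n+2) = 0" "w (n+3) = 0" "w (n+4) = 1" using va by (simp_all add: w 4)
        note ineq = inc3[unfolded Kf_def Tf_def va wa sn, simplified, simplified nr_def[symmetric] algebra_simps power2_eq_square, simplified]
        have False using ineq Pn hs hM hn by linarith
        then show ?thesis ..
      qed
    next
      case 3
      have va: "v (n+1) = 1" "v (n+2) = 1" "v (n+3) = 0" "v (n+4) = 0" using v 3 by (auto simp: inph_def)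
      have qq: "q = 2" by fact
      consider "j = n+1" | "j = n+2" | "j = n+3" | "j = n+4" using jc by blast
      then show ?thesis
      proof cases
        case 1
        have wa: "w (n+1) = 0" "w (n+2) = 1" "w (n+3) = 0" "w (n+4) = 0" using va by (simp_all add: w 1)
        note ineq = inc3[unfolded Kf_def Tf_def va wa, simplified, simplified nr_def[symmetric] algebra_simps power2_eq_square, simplified]
        have False using ineq Pn hs hM hn by linarith
        then show ?thesis ..
      next
        case 2
        have wa: "w (n+1) = 1" "w (n+2) = 0" "w (n+3) = 0" "w (n+4) = 0" using va by (simp_all add: w 2)
        note ineq = inc3[unfolded Kf_def Tf_def va wa, simplified, simplified nr_def[symmetric] algebra_simps power2_eq_square, simplified]
        have False using ineq Pn hs hM hn by linarith
        then show ?thesis ..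
      next
        case 3
        have wa: "w (n+1) = 1" "w (n+2) = 1" "w (n+3) = 1" "w (n+4) = 0" using va by (simp_all add: w 3)
        note ineq = inc3[unfolded Kf_def Tf_def va wa, simplified, simplified nr_def[symmetric] algebra_simps power2_eq_square, simplified]
        have "s = 0"
        proof (rule ccontr)
          assume "s \<noteq> 0"
          then have "1 \<le> N" using N by auto
          then have "1 \<le> s" using N by auto
          then show False using ineq by linarith
        qed
        then have "\<forall>i\<in>{1..n}. v i = 0" using sum_empty[OF vc] s_def by auto
        then have "inph n (Suc q) w" using wc wa qq 3 unfolding inph_def by (auto simp: w)
        then show ?thesis using rsw by simp
      next
        case 4
        have wa: "w (n+1) = 1" "w (n+2) = 1" "w (n+3) = 0" "w (n+4) = 1" using va by (simp_all add: w 4)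
        note ineq = inc3[unfolded Kf_def Tf_def va wa, simplified, simplified nr_def[symmetric] algebra_simps power2_eq_square, simplified]
        have False using ineq Pn hs hM hn by linarith
        then show ?thesis ..
      qed
    next
      case 4
      have va: "v (n+1) = 1" "v (n+2) = 1" "v (n+3) = 1" "v (n+4) = 0" "\<forall>i\<in>{1..n}. v i = 0" using v 4 by (auto simp: inph_def)
      have qq: "q = 3" by fact
      have "s = (\<Sum>i=1..n. (0::real))" unfolding s_def using va(5) by (intro sum.cong) auto
      then have sn: "s = 0" by simp
      consider "j = n+1" | "j = n+2" | "j = n+3" | "j = n+4" using jc by blast
      then show ?thesis
      proof cases
        case 1
        have wa: "w (n+1) = 0" "w (n+2) = 1" "w (n+3) = 1" "w (n+4) = 0" using va by (simp_all add: w 1)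
        note ineq = inc3[unfolded Kf_def Tf_def va wa sn, simplified, simplified nr_def[symmetric] algebra_simps power2_eq_square, simplified]
        have False using ineq Pn hs hM hn by linarith
        then show ?thesis ..
      next
        case 2
        have wa: "w (n+1) = 1" "w (n+2) = 0" "w (n+3) = 1" "w (n+4) = 0" using va by (simp_all add: w 2)
        note ineq = inc3[unfolded Kf_def Tf_def va wa sn, simplified, simplified nr_def[symmetric] algebra_simps power2_eq_square, simplified]
        have False using ineq Pn hs hM hn by linarith
        then show ?thesis ..
      next
        case 3
        have wa: "w (n+1) = 1" "w (n+2) = 1" "w (n+3) = 0" "w (n+4) = 0" using va by (simp_all add: w 3)
        note ineq = inc3[unfolded Kf_def Tf_def va wa sn, simplified, simplified nr_def[symmetric] algebra_simps power2_eq_square, simplified]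
        have False using ineq Pn hs hM hn by linarith
        then show ?thesis ..
      next
        case 4
        have wa: "w (n+1) = 1" "w (n+2) = 1" "w (n+3) = 1" "w (n+4) = 1" using va by (simp_all add: w 4)
        have "inph n (Suc q) w" using wc wa va qq 4 unfolding inph_def by (auto simp: w)
        then show ?thesis using rsw by simp
      qed
    next
      case 5
      have va: "v (n+1) = 1" "v (n+2) = 1" "v (n+3) = 1" "v (n+4) = 1" using v 5 by (auto simp: inph_def)
      have qq: "q = 4" by fact
      consider "j = n+1" | "j = n+2" | "j = n+3" | "j = n+4" using jc by blast
      then show ?thesis
      proof cases
        case 1
        have wa: "w (n+1) = 0" "w (n+2) = 1" "w (n+3) = 1" "w (n+4) = 1" using va by (simp_all add: w 1)
        note ineq = inc3[unfolded Kf_def Tf_def va wa, simplified, simplified nr_def[symmetric] algebra_simps power2_eq_square, simplified]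
        have False using ineq Pn hs hM hn by linarith
        then show ?thesis ..
      next
        case 2
        have wa: "w (n+1) = 1" "w (n+2) = 0" "w (n+3) = 1" "w (n+4) = 1" using va by (simp_all add: w 2)
        note ineq = inc3[unfolded Kf_def Tf_def va wa, simplified, simplified nr_def[symmetric] algebra_simps power2_eq_square, simplified]
        have False using ineq Pn hs hM hn by linarith
        then show ?thesis ..
      next
        case 3
        have wa: "w (n+1) = 1" "w (n+2) = 1" "w (n+3) = 0" "w (n+4) = 1" using va by (simp_all add: w 3)
        note ineq = inc3[unfolded Kf_def Tf_def va wa, simplified, simplified nr_def[symmetric] algebra_simps power2_eq_square, simplified]
        have False using ineq Pn hs hM hn by linarith
        then show ?thesis ..
      next
        case 4
        have wa: "w (n+1) = 1" "w (n+2) = 1" "w (n+3) = 1" "w (n+4) = 0" using va by (simp_all add: w 4)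
        note ineq = inc3[unfolded Kf_def Tf_def va wa, simplified, simplified nr_def[symmetric] algebra_simps power2_eq_square, simplified]
        have False using ineq Pn hs hM hn by linarith
        then show ?thesis ..
      qed
    qed
  qed
qed


lemma inph1_rs: "inph n 1 v \<Longrightarrow> rs n v = ones n"
  by (auto simp: inph_def rs_def ones_def)

lemma inph3_rs: "inph n 3 v \<Longrightarrow> rs n v = (\<lambda>_. 0)"
  by (auto simp: inph_def rs_def)

lemma inph_le4: "inph n q v \<Longrightarrow> q \<le> 4"
  by (simp add: inph_def)

definition phv :: "nat \<Rightarrow> (nat \<Rightarrow> real) \<Rightarrow> nat" where
  "phv n v = (if v (n+4) = 1 then 4 else if v (n+3) = 1 then 3 else if v (n+2) = 1 then 2 else if v (n+1) = 1 then 1 else 0)"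

lemma phv_inph: "inph n q v \<Longrightarrow> phv n v = q"
  unfolding inph_def phv_def by auto

lemma proj_lm:
  assumes n: "n = 4*k+2" and u: "inph n q u" and q: "q = 0 \<or> q = 4"
    and lm: "local_max (n+4) (fpoly_aux (Suc k)) u"
  shows "local_max n (fpoly_aux k) (rs n u)"
proof -
  have uc: "u \<in> cube (n+4)" using u by (simp add: inph_def)
  have K0: "Kf n (Mk k) u = 0" using u q by (auto simp: inph_def Kf_def algebra_simps)
  have "\<not> fpoly_aux k (rs n u) < fpoly_aux k w'" if a: "adjacent n (rs n u) w'" for w'
  proof
    assume inc: "fpoly_aux k (rs n u) < fpoly_aux k w'"
    from a obtain j where j: "j \<in> {1..n}" and w': "w' = (rs n u)(j := 1 - rs n u j)" unfolding adjacent_iff by blast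
    define w where "w = u(j := 1 - u j)"
    have jj: "j \<in> {1..n+4}" using j by auto
    have wc: "w \<in> cube (n+4)" using flip_cube[OF uc jj] by (simp add: w_def)
    have adj: "adjacent (n+4) u w" unfolding adjacent_iff using uc wc jj w_def by blast
    have rw: "rs n w = w'" using j w' by (auto simp: rs_def w_def)
    have "fpoly_aux (Suc k) w = fpoly_aux k w + ((\<Sum>i=1..n. u i) - u j + (1 - u j)) * Kf n (Mk k) u + Tf n (Mk k) u"
      using Fx[OF n j, of u "1 - u j"] by (simp add: w_def)
    moreover have "fpoly_aux (Suc k) u = fpoly_aux k u + (\<Sum>i=1..n. u i) * Kf n (Mk k) u + Tf n (Mk k) u"
      using F_eq'[OF n] by simp
    moreover have "fpoly_aux k w = fpoly_aux k w'" "fpoly_aux k u = fpoly_aux k (rs n u)"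
      using g_rs[OF n, of w] g_rs[OF n, of u] rw by auto
    ultimately have "fpoly_aux (Suc k) u < fpoly_aux (Suc k) w" using inc K0 by simp
    then show False using lm adj unfolding local_max_def by blast
  qed
  moreover have "rs n u \<in> cube n" using rs_cube[OF uc] by simp
  ultimately show ?thesis unfolding local_max_def by blast
qed

lemma not_lm:
  assumes n: "n = 4*k+2" and u: "inph n q u" and q: "q = 1 \<or> q = 2 \<or> q = 3 \<or> (q = 0 \<and> rs n u = ones n)"
  shows "\<not> local_max (n+4) (fpoly_aux (Suc k)) u"
proof -
  have uc: "u \<in> cube (n+4)" using u by (simp add: inph_def)
  define s where "s = (\<Sum>i=1..n. u i)"
  define M where "M = Mk k"
  define nr where "nr = real n"
  have hs: "0 \<le> s" "s \<le> nr" using sum_bounds[OF uc] by (auto simp: s_def nr_def)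
  have hM: "1 \<le> M" using M_ge1 by (simp add: M_def)
  have hn: "2 \<le> nr" using n by (simp add: nr_def)
  note P = prods[OF hs hM hn]
  note Pn = P[simplified algebra_simps power2_eq_square]
  have eu: "fpoly_aux (Suc k) u = fpoly_aux k u + s * Kf n M u + Tf n M u" using F_eq'[OF n] by (simp add: s_def M_def)
  have flipo: "adjacent (n+4) u (u(j := 1 - u j)) \<and> fpoly_aux (Suc k) (u(j := 1 - u j)) = fpoly_aux k u + s * Kf n M (u(j := 1 - u j)) + Tf n M (u(j := 1 - u j))"
    if j: "j \<in> {n+1..n+4}" for j
  proof
    have jj: "j \<in> {1..n+4}" using j by auto
    show "adjacent (n+4) u (u(j := 1 - u j))" unfolding adjacent_iff using uc flip_cube[OF uc jj] jj by blast
    show "fpoly_aux (Suc k) (u(j := 1 - u j)) = fpoly_aux k u + s * Kf n M (u(j := 1 - u j)) + Tf n M (u(j := 1 - u j))"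
      using Fo[OF n j, of u "1 - u j"] by (simp add: s_def M_def)
  qed
  have impr: "\<exists>w. adjacent (n+4) u w \<and> fpoly_aux (Suc k) u < fpoly_aux (Suc k) w"
  proof -
    consider "q = 0 \<and> rs n u = ones n" | "q = 1" | "q = 2" | "q = 3" using q by blast
    then show ?thesis
    proof cases
      case 1
      have va: "u (n+1) = 0" "u (n+2) = 0" "u (n+3) = 0" "u (n+4) = 0" using u 1 by (auto simp: inph_def)
      have "\<forall>i\<in>{1..n}. u i = 1" using 1 unfolding rs_def ones_def by (metis (no_types, lifting))
      then have "s = (\<Sum>i=1..n. (1::real))" unfolding s_def by (intro sum.cong) auto
      then have sn: "s = nr" by (simp add: nr_def)
      have j: "n+1 \<in> {n+1..n+4}" by simp
      define w where "w = u(n+1 := 1 - u (n+1))"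
      have wa: "w (n+1) = 1" "w (n+2) = 0" "w (n+3) = 0" "w (n+4) = 0" using va by (simp_all add: w_def)
      have "fpoly_aux (Suc k) u < fpoly_aux (Suc k) w"
        unfolding eu flipo[OF j, folded w_def, THEN conjunct2] Kf_def Tf_def va wa sn
        using Pn hM hn by (simp add: nr_def[symmetric] algebra_simps power2_eq_square)
      then show ?thesis using flipo[OF j, folded w_def] by blast
    next
      case 2
      have va: "u (n+1) = 1" "u (n+2) = 0" "u (n+3) = 0" "u (n+4) = 0" "\<forall>i\<in>{1..n}. u i = 1" using u 2 by (auto simp: inph_def)
      have "s = (\<Sum>i=1..n. (1::real))" unfolding s_def using va(5) by (intro sum.cong) auto
      then have sn: "s = nr" by (simp add: nr_def)
      have j: "n+2 \<in> {n+1..n+4}" by simp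
      define w where "w = u(n+2 := 1 - u (n+2))"
      have wa: "w (n+1) = 1" "w (n+2) = 1" "w (n+3) = 0" "w (n+4) = 0" using va by (simp_all add: w_def)
      have d: "fpoly_aux (Suc k) w - fpoly_aux (Suc k) u = 4 * (M * nr) - 1"
        unfolding eu flipo[OF j, folded w_def, THEN conjunct2] Kf_def Tf_def va wa sn
        by (simp add: nr_def[symmetric] algebra_simps power2_eq_square)
      have "fpoly_aux (Suc k) u < fpoly_aux (Suc k) w" using d P(5) hn by linarith
      then show ?thesis using flipo[OF j, folded w_def] by blast
    next
      case 3
      have va: "u (n+1) = 1" "u (n+2) = 1" "u (n+3) = 0" "u (n+4) = 0" using u 3 by (auto simp: inph_def)
      show ?thesis
      proof (cases "s = 0")
        case True
        have j: "n+3 \<in> {n+1..n+4}" by simp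
        define w where "w = u(n+3 := 1 - u (n+3))"
        have wa: "w (n+1) = 1" "w (n+2) = 1" "w (n+3) = 1" "w (n+4) = 0" using va by (simp_all add: w_def)
        have "fpoly_aux (Suc k) u < fpoly_aux (Suc k) w"
          unfolding eu flipo[OF j, folded w_def, THEN conjunct2] Kf_def Tf_def va wa True
          by (simp add: nr_def[symmetric] algebra_simps power2_eq_square)
        then show ?thesis using flipo[OF j, folded w_def] by blast
      next
        case False
        have "\<exists>i\<in>{1..n}. u i = 1"
        proof (rule ccontr)
          assume "\<not> (\<exists>i\<in>{1..n}. u i = 1)"
          then have "\<forall>i\<in>{1..n}. u i = 0" using cube01[OF uc] by blast
          then have "s = 0" unfolding s_def by simp
          then show False using False by simp
        qed
        then obtain i where i: "i \<in> {1..n}" "u i = 1" by blast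
        define w where "w = u(i := 1 - u i)"
        have ii: "i \<in> {1..n+4}" using i by auto
        have wc: "w \<in> cube (n+4)" using flip_cube[OF uc ii] by (simp add: w_def)
        have adj: "adjacent (n+4) u w" unfolding adjacent_iff using uc wc ii w_def by blast
        have ew: "fpoly_aux (Suc k) w = fpoly_aux k w + (s - u i + (1 - u i)) * Kf n M u + Tf n M u"
          using Fx[OF n i(1), of u "1 - u i"] by (simp add: w_def s_def M_def)
        have gd: "fpoly_aux k u - fpoly_aux k w \<le> M - 1" using g_diff[OF wc uc, of k] n by (simp add: M_def)
        have K: "Kf n M u = M * (nr + 1) - 2 * M * nr" using va by (simp add: Kf_def nr_def)
        have "fpoly_aux (Suc k) u < fpoly_aux (Suc k) w"
          unfolding eu ew K i(2) using gd Pn hM hn by (simp add: algebra_simps ; linarith)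
        then show ?thesis using adj by blast
      qed
    next
      case 4
      have va: "u (n+1) = 1" "u (n+2) = 1" "u (n+3) = 1" "u (n+4) = 0" "\<forall>i\<in>{1..n}. u i = 0" using u 4 by (auto simp: inph_def)
      have sn: "s = 0" unfolding s_def using va(5) by simp
      have j: "n+4 \<in> {n+1..n+4}" by simp
      define w where "w = u(n+4 := 1 - u (n+4))"
      have wa: "w (n+1) = 1" "w (n+2) = 1" "w (n+3) = 1" "w (n+4) = 1" using va by (simp_all add: w_def)
      have "fpoly_aux (Suc k) u < fpoly_aux (Suc k) w"
        unfolding eu flipo[OF j, folded w_def, THEN conjunct2] Kf_def Tf_def va wa sn
        using Pn hM hn by (simp add: nr_def[symmetric] algebra_simps power2_eq_square)
      then show ?thesis using flipo[OF j, folded w_def] by blast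
    qed
  qed
  then show ?thesis unfolding local_max_def by blast
qed


lemma disc: "P 0 \<Longrightarrow> \<not> P L \<Longrightarrow> \<exists>i<L. P i \<and> \<not> P (Suc i)"
proof (induction L)
  case 0 then show ?case by simp
next
  case (Suc L)
  then show ?case by (cases "P L") (auto intro: less_SucI)
qed

lemma proj_path:
  assumes "p' \<noteq> []" "set p' \<subseteq> cube m" "n \<le> m"
    and "\<And>j. Suc j < length p' \<Longrightarrow> adjacent n (rs n (p'!j)) (rs n (p'!Suc j)) \<and> f (rs n (p'!j)) < f (rs n (p'!Suc j))"
  shows "increasing_path n f (map (rs n) p')"
  unfolding increasing_path_def using assms by (auto intro: rs_cube)

lemma rs_zero: "rs n (\<lambda>_. 0) = (\<lambda>_. 0)" by (auto simp: rs_def)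

lemma rs_ones: "rs n (ones (n+4)) = ones n" by (auto simp: rs_def ones_def)

definition Qk :: "nat \<Rightarrow> bool" where
  "Qk k \<longleftrightarrow> (\<forall>p. increasing_path (4*k+2) (fpoly_aux k) p \<and> hd p = (\<lambda>_. 0) \<and> local_max (4*k+2) (fpoly_aux k) (last p)
      \<longrightarrow> last p = ones (4*k+2) \<and> 2^(k+1) \<le> length p - 1)"

lemma LM_step:
  assumes n: "n = 4*k+2" and IH: "local_max n (fpoly_aux k) (ones n)"
  shows "local_max (n+4) (fpoly_aux (Suc k)) (ones (n+4))"
proof -
  have o: "inph n 4 (ones (n+4))" unfolding inph_def using ones_cube[of "n+4"] by (simp add: ones_def)
  have "\<not> fpoly_aux (Suc k) (ones (n+4)) < fpoly_aux (Suc k) w" if a: "adjacent (n+4) (ones (n+4)) w" for w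
  proof
    assume inc: "fpoly_aux (Suc k) (ones (n+4)) < fpoly_aux (Suc k) w"
    from step[OF n o a inc] inph_le4[of n 5 w]
    have "adjacent n (ones n) (rs n w) \<and> fpoly_aux k (ones n) < fpoly_aux k (rs n w)"
      unfolding rs_ones by auto
    then show False using IH unfolding local_max_def by blast
  qed
  then show ?thesis unfolding local_max_def using ones_cube by blast
qed


lemma Q_step:
  assumes n: "n = 4*k+2" and IH: "Qk k" and LM: "local_max n (fpoly_aux k) (ones n)"
  shows "Qk (Suc k)"
  unfolding Qk_def
proof (intro allI impI)
  fix p assume H: "increasing_path (4 * Suc k + 2) (fpoly_aux (Suc k)) p \<and> hd p = (\<lambda>_. 0) \<and>
       local_max (4 * Suc k + 2) (fpoly_aux (Suc k)) (last p)"
  have e: "4 * Suc k + 2 = n + 4" using n by simp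
  have ip: "increasing_path (n+4) (fpoly_aux (Suc k)) p" using H[unfolded e] by blast
  have h0: "hd p = (\<lambda>_. 0)" using H by blast
  have lm: "local_max (n+4) (fpoly_aux (Suc k)) (last p)" using H[unfolded e] by blast
  have IH': "\<And>p. increasing_path n (fpoly_aux k) p \<Longrightarrow> hd p = (\<lambda>_. 0) \<Longrightarrow> local_max n (fpoly_aux k) (last p)
      \<Longrightarrow> last p = ones n \<and> 2^(k+1) \<le> length p - 1" using IH n unfolding Qk_def by blast
  have pne: "p \<noteq> []" and pc: "set p \<subseteq> cube (n+4)"
    and ps: "\<And>j. Suc j < length p \<Longrightarrow> adjacent (n+4) (p!j) (p!Suc j) \<and> fpoly_aux (Suc k) (p!j) < fpoly_aux (Suc k) (p!Suc j)"
    using ip unfolding increasing_path_def by auto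
  define L where "L = length p - 1"
  have lenp: "length p = Suc L" using pne by (simp add: L_def)
  have p0: "p!0 = (\<lambda>_. 0)" using h0 pne by (simp add: hd_conv_nth)
  have pL: "last p = p!L" using pne by (simp add: last_conv_nth L_def)
  define R where "R j = phv n (p!j)" for j
  have inv: "inph n (R j) (p!j)" if "j \<le> L" for j
    using that
  proof (induction j)
    case 0
    have "inph n 0 (p!0)" unfolding p0 inph_def using zero_cube by simp
    then show ?case using phv_inph R_def by simp
  next
    case (Suc j)
    then have a: "inph n (R j) (p!j)" by simp
    have "Suc j < length p" using Suc.prems lenp by simp
    from ps[OF this] step[OF n a] have "inph n (R j) (p!Suc j) \<or> inph n (Suc (R j)) (p!Suc j)" by blast
    then show ?case using phv_inph R_def by metis
  qed
  have S: "(R (Suc j) = R j \<and> ((R j = 0 \<or> R j = 4) \<longrightarrow> adjacent n (rs n (p!j)) (rs n (p!Suc j)) \<and> fpoly_aux k (rs n (p!j)) < fpoly_aux k (rs n (p!Suc j))))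
     \<or> (R (Suc j) = Suc (R j) \<and> rs n (p!Suc j) = rs n (p!j))" if "j < L" for j
  proof -
    have a: "inph n (R j) (p!j)" using inv that by simp
    have "Suc j < length p" using that lenp by simp
    from ps[OF this] step[OF n a] show ?thesis using phv_inph R_def by metis
  qed
  have S1: "R j \<le> R (Suc j)" if "j < L" for j using S[OF that] by auto
  have mono: "R j \<le> R j'" if "j \<le> j'" "j' \<le> L" for j j'
    using that
  proof (induction j' rule: dec_induct)
    case base then show ?case by simp
  next
    case (step m) then show ?case using S1[of m] by simp
  qed
  have le4: "R j \<le> 4" if "j \<le> L" for j using inv[OF that] inph_le4 by blast
  have R0: "R 0 = 0" using inv[of 0] phv_inph R_def p0 by (simp add: p0 phv_def)
  define u where "u = last p"
  have uL: "inph n (R L) u" using inv[of L] pL u_def by simp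
  have lmu: "local_max (n+4) (fpoly_aux (Suc k)) u" using lm u_def by simp
  have "R L = 0 \<or> R L = 4"
  proof (rule ccontr)
    assume "\<not> (R L = 0 \<or> R L = 4)"
    then have "R L = 1 \<or> R L = 2 \<or> R L = 3" using le4[of L] by auto
    then show False using not_lm[OF n uL] lmu by blast
  qed
  moreover have "R L \<noteq> 0"
  proof
    assume RL: "R L = 0"
    have all0: "R j = 0" if "j \<le> L" for j using mono[OF that order_refl] RL by simp
    have pp: "increasing_path n (fpoly_aux k) (map (rs n) p)"
    proof (rule proj_path[OF pne pc, of n])
      show "n \<le> n+4" by simp
      fix j assume j: "Suc j < length p"
      then have "j < L" using lenp by simp
      with S[OF this] all0[of j] all0[of "Suc j"]
      show "adjacent n (rs n (p!j)) (rs n (p!Suc j)) \<and> fpoly_aux k (rs n (p!j)) < fpoly_aux k (rs n (p!Suc j))"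
        using j lenp by auto
    qed
    have hh: "hd (map (rs n) p) = (\<lambda>_. 0)" using h0 pne rs_zero by (simp add: hd_map)
    have ll: "last (map (rs n) p) = rs n u" using pne u_def by (simp add: last_map)
    have "local_max n (fpoly_aux k) (rs n u)" using proj_lm[OF n uL _ lmu] RL by simp
    then have "rs n u = ones n" using IH'[OF pp hh] ll by simp
    then show False using not_lm[OF n uL] lmu RL by simp
  qed
  ultimately have RL: "R L = 4" by simp
  obtain i where i: "i < L" "R i = 0" "R (Suc i) \<noteq> 0" using disc[of "\<lambda>j. R j = 0" L] R0 RL by auto
  obtain k0 where k0: "k0 < L" "R k0 \<noteq> 4" "R (Suc k0) = 4" using disc[of "\<lambda>j. R j \<noteq> 4" L] R0 RL by auto
  have Ri1: "R (Suc i) = 1" "rs n (p!Suc i) = rs n (p!i)" using S[OF i(1)] i by auto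
  have Rk0: "R k0 = 3" "rs n (p!Suc k0) = rs n (p!k0)" using S[OF k0(1)] k0 by auto
  have rsi: "rs n (p!i) = ones n" using inph1_rs[of n "p!Suc i"] inv[of "Suc i"] Ri1 i(1) by simp
  have rsk: "rs n (p!Suc k0) = (\<lambda>_. 0)" using inph3_rs[of n "p!k0"] inv[of k0] Rk0 k0(1) by simp
  have ik: "i < k0"
  proof (rule ccontr)
    assume "\<not> i < k0"
    then have "R k0 \<le> R i" using mono[of k0 i] i(1) by simp
    then show False using Rk0 i(2) by simp
  qed
  define q1 where "q1 = take (Suc i) p"
  have lq1: "length q1 = Suc i" using i(1) lenp by (simp add: q1_def)
  have nq1: "\<And>j. j < Suc i \<Longrightarrow> q1!j = p!j" by (simp add: q1_def)
  have pp1: "increasing_path n (fpoly_aux k) (map (rs n) q1)"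
  proof (rule proj_path[of q1 "n+4"])
    show "q1 \<noteq> []" using lq1 by auto
    show "set q1 \<subseteq> cube (n+4)" using pc set_take_subset[of "Suc i" p] unfolding q1_def by blast
    show "n \<le> n+4" by simp
    fix j assume j: "Suc j < length q1"
    then have jL: "j < L" and "Suc j \<le> i" using lq1 i(1) by auto
    then have "R j = 0" "R (Suc j) = 0" using mono[of j i] mono[of "Suc j" i] i by auto
    then show "adjacent n (rs n (q1!j)) (rs n (q1!Suc j)) \<and> fpoly_aux k (rs n (q1!j)) < fpoly_aux k (rs n (q1!Suc j))"
      using S[OF jL] nq1 j lq1 by auto
  qed
  have h1: "hd (map (rs n) q1) = (\<lambda>_. 0)"
  proof -
    have ne: "q1 \<noteq> []" using lq1 by auto
    have "hd q1 = (\<lambda>_. 0)" using ne nq1[of 0] p0 by (simp add: hd_conv_nth)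
    then show ?thesis using ne rs_zero by (simp add: hd_map)
  qed
  have l1: "last (map (rs n) q1) = ones n"
  proof -
    have ne: "q1 \<noteq> []" using lq1 by auto
    have "last q1 = q1 ! i" using lq1 last_conv_nth[OF ne] by simp
    then show ?thesis using lq1 nq1[of i] rsi last_map[OF ne, of "rs n"] by simp
  qed
  have b1: "2^(k+1) \<le> i" using IH'[OF pp1 h1] l1 LM lq1 by simp
  define q2 where "q2 = drop (Suc k0) p"
  have lq2: "length q2 = L - k0" using lenp by (simp add: q2_def)
  have nq2: "\<And>j. j < L - k0 \<Longrightarrow> q2!j = p!(Suc k0 + j)" using lenp by (simp add: q2_def)
  have R4: "R j = 4" if "Suc k0 \<le> j" "j \<le> L" for j using mono[OF that] le4[OF that(2)] k0(3) by simp
  have pp2: "increasing_path n (fpoly_aux k) (map (rs n) q2)"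
  proof (rule proj_path[of q2 "n+4"])
    show "q2 \<noteq> []" using lq2 k0(1) by auto
    show "set q2 \<subseteq> cube (n+4)" using pc set_drop_subset[of "Suc k0" p] unfolding q2_def by blast
    show "n \<le> n+4" by simp
    fix j assume j: "Suc j < length q2"
    then have jL: "Suc k0 + j < L" using lq2 by simp
    then have "R (Suc k0 + j) = 4" "R (Suc (Suc k0 + j)) = 4" using R4 by auto
    then show "adjacent n (rs n (q2!j)) (rs n (q2!Suc j)) \<and> fpoly_aux k (rs n (q2!j)) < fpoly_aux k (rs n (q2!Suc j))"
      using S[OF jL] nq2[of j] nq2[of "Suc j"] j lq2 by auto
  qed
  have h2: "hd (map (rs n) q2) = (\<lambda>_. 0)"
  proof -
    have ne: "q2 \<noteq> []" using lq2 k0(1) by auto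
    have "hd q2 = q2 ! 0" using hd_conv_nth[OF ne] by simp
    then show ?thesis using lq2 k0(1) nq2[of 0] rsk hd_map[OF ne, of "rs n"] by simp
  qed
  have l2: "last (map (rs n) q2) = rs n u"
  proof -
    have "last q2 = last p" unfolding q2_def using k0(1) lenp by (simp add: last_drop)
    moreover have ne: "q2 \<noteq> []" using lq2 k0(1) by auto
    ultimately show ?thesis using u_def last_map[OF ne, of "rs n"] by simp
  qed
  have lmr: "local_max n (fpoly_aux k) (rs n u)" using proj_lm[OF n uL _ lmu] RL by simp
  have r2: "rs n u = ones n" and b2: "2^(k+1) \<le> L - k0 - 1" using IH'[OF pp2 h2] l2 lmr lq2 by auto
  have uo: "u = ones (n+4)"
  proof
    fix x
    have uc: "u \<in> cube (n+4)" using uL by (simp add: inph_def)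
    have ua: "u (n+1) = 1" "u (n+2) = 1" "u (n+3) = 1" "u (n+4) = 1" using uL RL by (auto simp: inph_def)
    consider "x \<in> {1..n}" | "x \<in> {n+1..n+4}" | "x \<notin> {1..n+4}" by fastforce
    then show "u x = ones (n+4) x"
    proof cases
      case 1 then show ?thesis using fun_cong[OF r2, of x] by (simp add: rs_def ones_def)
    next
      case 2 then have "x = n+1 \<or> x = n+2 \<or> x = n+3 \<or> x = n+4" by auto
      then show ?thesis using ua 2 by (auto simp: ones_def)
    next
      case 3 then show ?thesis using uc by (simp add: cube_def ones_def)
    qed
  qed
  have "2^(Suc k + 1) \<le> L" using b1 b2 ik by simp
  then show "last p = ones (4 * Suc k + 2) \<and> 2 ^ (Suc k + 1) \<le> length p - 1"
    unfolding e using uo u_def L_def by simp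
qed


lemma g0_flip: assumes "v \<in> cube 2" "t \<in> {1..2}"
  shows "fpoly_aux 0 (v(t := 1 - v t)) = fpoly_aux 0 v + 1 - 2 * v t"
proof -
  have "t = 1 \<or> t = 2" using assms(2) by auto
  then show ?thesis by auto
qed

lemma LM0: "local_max 2 (fpoly_aux 0) (ones 2)"
proof -
  have "\<not> fpoly_aux 0 (ones 2) < fpoly_aux 0 w" if a: "adjacent 2 (ones 2) w" for w
  proof -
    from a obtain t where t: "t \<in> {1..2}" and w: "w = (ones 2)(t := 1 - ones 2 t)" unfolding adjacent_iff by blast
    have "ones 2 t = 1" using t by (simp add: ones_def)
    then show ?thesis using g0_flip[OF ones_cube t] w by simp
  qed
  then show ?thesis unfolding local_max_def using ones_cube by blast
qed

lemma Q0: "Qk 0"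
  unfolding Qk_def
proof (intro allI impI)
  fix p assume H: "increasing_path (4 * 0 + 2) (fpoly_aux 0) p \<and> hd p = (\<lambda>_. 0) \<and> local_max (4 * 0 + 2) (fpoly_aux 0) (last p)"
  have e: "4 * 0 + 2 = (2::nat)" by simp
  have ip: "increasing_path 2 (fpoly_aux 0) p" and h0: "hd p = (\<lambda>_. 0)" and lm: "local_max 2 (fpoly_aux 0) (last p)"
    using H[unfolded e] by blast+
  have pne: "p \<noteq> []" and pc: "set p \<subseteq> cube 2"
    and ps: "\<And>j. Suc j < length p \<Longrightarrow> adjacent 2 (p!j) (p!Suc j) \<and> fpoly_aux 0 (p!j) < fpoly_aux 0 (p!Suc j)"
    using ip unfolding increasing_path_def by auto
  define u where "u = last p"
  have uc: "u \<in> cube 2" using lm u_def by (simp add: local_max_def)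
  have u1: "u t = 1" if t: "t \<in> {1..2}" for t
  proof (rule ccontr)
    assume "u t \<noteq> 1"
    then have "u t = 0" using cube01[OF uc, of t] by auto
    moreover have "adjacent 2 u (u(t := 1 - u t))" unfolding adjacent_iff using uc flip_cube[OF uc t] t by blast
    ultimately show False using lm g0_flip[OF uc t] u_def unfolding local_max_def by fastforce
  qed
  have uo: "u = ones 2"
  proof
    fix x show "u x = ones 2 x"
    proof (cases "x \<in> {1..2}")
      case True then show ?thesis using u1 by (simp add: ones_def)
    next
      case False then show ?thesis using uc by (simp add: cube_def ones_def)
    qed
  qed
  have bnd: "fpoly_aux 0 (p!j) \<le> real j" if "j < length p" for j
    using that
  proof (induction j)
    case 0
    have "p!0 = (\<lambda>_. 0)" using h0 pne by (simp add: hd_conv_nth)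
    then show ?case by simp
  next
    case (Suc j)
    have a: "adjacent 2 (p!j) (p!Suc j)" using ps Suc.prems by blast
    then obtain t where t: "t \<in> {1..2}" and w: "p!Suc j = (p!j)(t := 1 - (p!j) t)" and vc: "p!j \<in> cube 2"
      unfolding adjacent_iff by blast
    have "0 \<le> (p!j) t" using cube_ge0[OF vc] .
    then show ?case using g0_flip[OF vc t] w Suc.IH Suc.prems by simp
  qed
  define L where "L = length p - 1"
  have "last p = p!L" using pne by (simp add: last_conv_nth L_def)
  moreover have "L < length p" using pne by (simp add: L_def)
  ultimately have "fpoly_aux 0 u \<le> real L" using bnd u_def by simp
  moreover have "fpoly_aux 0 u = 2" using uo by (simp add: ones_def)
  ultimately have "2 \<le> L" by simp
  then show "last p = ones (4 * 0 + 2) \<and> 2 ^ (0 + 1) \<le> length p - 1" unfolding e using uo u_def L_def by simp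
qed

lemma all_k: "Qk k \<and> local_max (4*k+2) (fpoly_aux k) (ones (4*k+2))"
proof (induction k)
  case 0
  have e: "4 * 0 + 2 = (2::nat)" by simp
  show ?case unfolding e using Q0 LM0 by blast
next
  case (Suc k)
  have "Qk (Suc k)" using Q_step[OF refl] Suc.IH by blast
  moreover have "local_max (4*k+2+4) (fpoly_aux (Suc k)) (ones (4*k+2+4))" using LM_step[OF refl] Suc.IH by blast
  moreover have "4 * Suc k + 2 = 4*k+2+4" by simp
  ultimately show ?case by simp
qed

theorem theorem1:
  fixes n :: nat and p :: "(nat \<Rightarrow> real) list"
  assumes "n mod 4 = 2"
    and "increasing_path n (fpoly n) p"
    and "hd p = (\<lambda>_. 0)"
    and "local_max n (fpoly n) (last p)"
  shows "real (length p - 1) \<ge> 2 powr (real n / 4)"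
proof -
  define k where "k = (n - 2) div 4"
  have nk: "n = 4*k+2" using assms(1) unfolding k_def by presburger
  have f: "fpoly n = fpoly_aux k" unfolding fpoly_def k_def ..
  have "Qk k" using all_k by blast
  moreover have "increasing_path (4*k+2) (fpoly_aux k) p" using assms(2) f nk by simp
  moreover have "local_max (4*k+2) (fpoly_aux k) (last p)" using assms(4) f nk by simp
  ultimately have b: "2^(k+1) \<le> length p - 1" using assms(3) unfolding Qk_def by blast
  have "2 powr (real n / 4) \<le> 2 powr (real (k+1))"
    by (rule powr_mono) (auto simp: nk)
  also have "\<dots> = 2^(k+1)" by (rule powr_realpow) simp
  also have "\<dots> \<le> real (length p - 1)" using b by (metis of_nat_le_iff of_nat_numeral of_nat_power)
  finally show ?thesis .
qed

end
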